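(* For all integers $m\ge1$ and $j\ge0$, \[b_{\mathcal{G}}(m,m+j,1)=b_{\mathcal{G}}(m,m+j,\bar1)=q^{\binom{m+1}{2}+\binom{j+1}{2}}{m-1\brack j}.\]
   Context: An overpartition is a partition in which the first occurrence of each part size may be overlined, with parts listed in non-increasing order with respect to $1<\bar1<2<\bar2<\cdots$. A part is of size $t$ if it is $t$ or $\bar t$, and $|\pi|$ is the sum of the sizes of the parts. For $m\ge1$, $\mathcal{G}(m)$ is the set of overpartitions $(\pi_1,\dots,\pi_m)$ such that for every $1\le i<m$, if $\pi_{i+1}$ has size $t$ then $\pi_i\in\{\overline{t+1},\,t+2\}$. $b_{\mathcal{G}}(m,j,1)$ (resp. $b_{\mathcal{G}}(m,j,\bar1)$) is $\sum q^{|\pi|}$ over $\pi\in\mathcal{G}(m)$ whose largest part has size $j$ and whose smallest part is $1$ (resp. $\bar1$). The Gaussian binomial is ${M\brack N}=\frac{(q;q)_M}{(q;q)_N(q;q)_{M-N}}$ for $0\le N\le M$ and $0$ otherwise, where $(q;q)_n=\prod_{i=1}^n(1-q^i)$. *)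

theory Defs
  imports "HOL-Computational_Algebra.Formal_Power_Series"
begin

text \<open>A part of an overpartition is a pair (t, ov): t is its size (t >= 1) and
  ov says whether it is overlined. Parts are listed in non-increasing order w.r.t.
  1 < 1bar < 2 < 2bar < ..., encoded by the key 2*t + (1 if overlined).\<close>

type_synonym opart = "nat \<times> bool"

definition part_key :: "opart \<Rightarrow> nat" where
  "part_key p = 2 * fst p + (if snd p then 1 else 0)"

definition overpartition :: "opart list \<Rightarrow> bool" where
  "overpartition ps \<longleftrightarrow>
     (\<forall>p\<in>set ps. fst p \<ge> 1) \<and>
     sorted_wrt (\<lambda>a b. part_key a \<ge> part_key b) ps \<and>
     (\<forall>i j. i < j \<and> j < length ps \<and> snd (ps ! j) \<longrightarrow> fst (ps ! i) \<noteq> fst (ps ! j))"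

definition osize :: "opart list \<Rightarrow> nat" where
  "osize ps = (\<Sum>p\<leftarrow>ps. fst p)"

definition G :: "nat \<Rightarrow> opart list set" where
  "G m = {ps. overpartition ps \<and> length ps = m \<and>
     (\<forall>i. Suc i < m \<longrightarrow>
        (let t = fst (ps ! Suc i) in ps ! i = (t + 1, True) \<or> ps ! i = (t + 2, False)))}"

definition bG :: "nat \<Rightarrow> nat \<Rightarrow> opart \<Rightarrow> rat fps" where
  "bG m j c = (\<Sum>ps\<in>{ps \<in> G m. Max (fst ` set ps) = j \<and> last ps = c}. fps_X ^ osize ps)"

definition qpoch :: "nat \<Rightarrow> rat fps" where
  "qpoch n = (\<Prod>i=1..n. 1 - fps_X ^ i)"

definition gauss_binom :: "nat \<Rightarrow> nat \<Rightarrow> rat fps" where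
  "gauss_binom M N = (if N \<le> M then qpoch M / (qpoch N * qpoch (M - N)) else 0)"

end

theory Submission
  imports Defs
begin

fun chain :: "opart list \<Rightarrow> bool" where
  "chain [] = True"
| "chain [p] = (fst p \<ge> 1)"
| "chain (p # q # rest) = ((p = (fst q + 1, True) \<or> p = (fst q + 2, False)) \<and> chain (q # rest))"

lemma chain_props:
  "chain ps \<Longrightarrow> (\<forall>x\<in>set ps. fst x \<ge> 1) \<and> sorted_wrt (\<lambda>a b. fst a > fst b) ps"
  by (induction ps rule: chain.induct) auto

lemma chain_hd_max:
  "chain ps \<Longrightarrow> ps \<noteq> [] \<Longrightarrow> \<forall>x\<in>set ps. fst x \<le> fst (hd ps)"
  by (induction ps rule: chain.induct) auto

lemma chain_overpartition: "chain ps \<Longrightarrow> overpartition ps"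
proof -
  assume c: "chain ps"
  from chain_props[OF c] have a: "\<forall>x\<in>set ps. fst x \<ge> 1"
    and s: "sorted_wrt (\<lambda>a b. fst a > fst b) ps" by auto
  have "sorted_wrt (\<lambda>a b. part_key a \<ge> part_key b) ps"
    using s by (rule sorted_wrt_mono_rel[rotated]) (auto simp: part_key_def)
  moreover have "\<forall>i j. i < j \<and> j < length ps \<and> snd (ps ! j) \<longrightarrow> fst (ps ! i) \<noteq> fst (ps ! j)"
    using sorted_wrt_nth_less[OF s] by fastforce
  ultimately show ?thesis using a unfolding overpartition_def by blast
qed

lemma chain_nth:
  "chain ps \<longleftrightarrow> (\<forall>x\<in>set ps. fst x \<ge> 1) \<and> (\<forall>i. Suc i < length ps \<longrightarrow>
        (let t = fst (ps ! Suc i) in ps ! i = (t + 1, True) \<or> ps ! i = (t + 2, False)))"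
proof (induction ps rule: chain.induct)
  case (3 p q rest)
  show ?case
  proof
    assume "chain (p # q # rest)"
    then show "(\<forall>x\<in>set (p # q # rest). fst x \<ge> 1) \<and> (\<forall>i. Suc i < length (p # q # rest) \<longrightarrow>
        (let t = fst ((p # q # rest) ! Suc i) in (p # q # rest) ! i = (t + 1, True) \<or> (p # q # rest) ! i = (t + 2, False)))"
      using 3 chain_props[of "p # q # rest"]
      by (auto simp: Let_def less_Suc_eq_0_disj)
  next
    assume h: "(\<forall>x\<in>set (p # q # rest). fst x \<ge> 1) \<and> (\<forall>i. Suc i < length (p # q # rest) \<longrightarrow>
        (let t = fst ((p # q # rest) ! Suc i) in (p # q # rest) ! i = (t + 1, True) \<or> (p # q # rest) ! i = (t + 2, False)))"
    have h0: "p = (fst q + 1, True) \<or> p = (fst q + 2, False)"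
      using h[THEN conjunct2, rule_format, of 0] by (simp add: Let_def)
    have "chain (q # rest)"
      using 3 h by (auto simp: Let_def)
    then show "chain (p # q # rest)" using h0 by simp
  qed
qed auto

lemma G_chain: "G m = {ps. length ps = m \<and> chain ps}"
  unfolding G_def using chain_nth chain_overpartition unfolding overpartition_def
  by auto

lemma chain_Cons2:
  "ps' \<noteq> [] \<Longrightarrow> chain (p # ps') \<longleftrightarrow> chain ps' \<and> (p = (fst (hd ps') + 1, True) \<or> p = (fst (hd ps') + 2, False))"
  by (cases ps') auto

lemma Max_chain: "chain ps \<Longrightarrow> ps \<noteq> [] \<Longrightarrow> Max (fst ` set ps) = fst (hd ps)"
  using chain_hd_max by (intro Max_eqI) (auto intro: hd_in_set)

definition S :: "nat \<Rightarrow> nat \<Rightarrow> opart \<Rightarrow> opart list set" where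
  "S m N c = {ps \<in> G m. Max (fst ` set ps) = N \<and> last ps = c}"

lemma S_rec:
  assumes "m \<ge> 1"
  shows "S (Suc m) N c = Cons (N, True) ` {ps \<in> G m. Max (fst ` set ps) + 1 = N \<and> last ps = c}
     \<union> Cons (N, False) ` {ps \<in> G m. Max (fst ` set ps) + 2 = N \<and> last ps = c}"
proof (intro equalityI subsetI)
  fix ps assume "ps \<in> S (Suc m) N c"
  then have l: "length ps = Suc m" and ch: "chain ps" and mx: "Max (fst ` set ps) = N" and la: "last ps = c"
    by (auto simp: S_def G_chain)
  then obtain p ps' where ps: "ps = p # ps'" by (cases ps) auto
  have ne: "ps' \<noteq> []" using l ps assms by auto
  have ch': "chain ps'" and pp: "p = (fst (hd ps') + 1, True) \<or> p = (fst (hd ps') + 2, False)"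
    using ch ps chain_Cons2[OF ne] by auto
  have "Max (fst ` set ps) = fst p" using Max_chain[OF ch] ps by simp
  then have fp: "fst p = N" using mx by simp
  have m': "Max (fst ` set ps') = fst (hd ps')" using Max_chain[OF ch' ne] .
  have "ps' \<in> G m" using l ps ch' by (simp add: G_chain)
  moreover have "last ps' = c" using la ps ne by simp
  ultimately show "ps \<in> Cons (N, True) ` {ps \<in> G m. Max (fst ` set ps) + 1 = N \<and> last ps = c}
     \<union> Cons (N, False) ` {ps \<in> G m. Max (fst ` set ps) + 2 = N \<and> last ps = c}"
    using pp fp m' ps by auto
next
  fix ps assume h: "ps \<in> Cons (N, True) ` {ps \<in> G m. Max (fst ` set ps) + 1 = N \<and> last ps = c}
     \<union> Cons (N, False) ` {ps \<in> G m. Max (fst ` set ps) + 2 = N \<and> last ps = c}"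
  then obtain p ps' where ps: "ps = p # ps'" and g: "ps' \<in> G m" and la: "last ps' = c"
    and pp: "(p = (N, True) \<and> Max (fst ` set ps') + 1 = N) \<or> (p = (N, False) \<and> Max (fst ` set ps') + 2 = N)"
    by blast
  have l: "length ps' = m" and ch': "chain ps'" using g by (auto simp: G_chain)
  have ne: "ps' \<noteq> []" using l assms by auto
  have m': "Max (fst ` set ps') = fst (hd ps')" using Max_chain[OF ch' ne] .
  have ch: "chain ps" using ps chain_Cons2[OF ne] ch' pp m' by auto
  have "Max (fst ` set ps) = fst p" using Max_chain[OF ch] ps by simp
  then show "ps \<in> S (Suc m) N c" using ps ch l la ne pp by (auto simp: S_def G_chain)
qed

lemma S_shift:
  "{ps \<in> G m. Max (fst ` set ps) + d = N \<and> last ps = c} = (if d \<le> N then S m (N - d) c else {})"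
  by (auto simp: S_def)

lemma finite_GK: "finite {ps \<in> G m. Max (fst ` set ps) + d = N \<and> last ps = c}"
proof -
  have "{ps \<in> G m. Max (fst ` set ps) + d = N \<and> last ps = c} \<subseteq> {ps. set ps \<subseteq> {1..N} \<times> UNIV \<and> length ps = m}"
  proof
    fix ps assume h: "ps \<in> {ps \<in> G m. Max (fst ` set ps) + d = N \<and> last ps = c}"
    then have l: "length ps = m" and ch: "chain ps" and mx: "Max (fst ` set ps) + d = N" by (auto simp: G_chain)
    have "\<forall>x\<in>set ps. fst x \<le> N"
    proof
      fix x assume "x \<in> set ps"
      then have "fst x \<le> Max (fst ` set ps)" by (intro Max_ge) auto
      then show "fst x \<le> N" using mx by simp
    qed
    then show "ps \<in> {ps. set ps \<subseteq> {1..N} \<times> UNIV \<and> length ps = m}"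
      using chain_props[OF ch] l by fastforce
  qed
  moreover have "finite {ps. set ps \<subseteq> {1..N} \<times> (UNIV::bool set) \<and> length ps = m}"
    by (rule finite_lists_length_eq) simp
  ultimately show ?thesis by (rule finite_subset)
qed

lemma bG_S: "bG m N c = (\<Sum>ps\<in>S m N c. fps_X ^ osize ps)"
  by (simp add: bG_def S_def)

lemma bG_rec:
  assumes "m \<ge> 1"
  shows "bG (Suc m) N c = fps_X ^ N * ((if 1 \<le> N then bG m (N - 1) c else 0) + (if 2 \<le> N then bG m (N - 2) c else 0))"
proof -
  let ?A = "{ps \<in> G m. Max (fst ` set ps) + 1 = N \<and> last ps = c}"
  let ?B = "{ps \<in> G m. Max (fst ` set ps) + 2 = N \<and> last ps = c}"
  have fA: "finite ?A" by (rule finite_GK)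
  have fB: "finite ?B" by (rule finite_GK)
  have "bG (Suc m) N c = (\<Sum>ps\<in>Cons (N, True) ` ?A \<union> Cons (N, False) ` ?B. fps_X ^ osize ps)"
    using S_rec[OF assms] by (simp add: bG_S)
  also have "\<dots> = (\<Sum>ps\<in>Cons (N, True) ` ?A. fps_X ^ osize ps) + (\<Sum>ps\<in>Cons (N, False) ` ?B. fps_X ^ osize ps)"
    by (rule sum.union_disjoint) (use fA fB in auto)
  also have "\<dots> = (\<Sum>ps\<in>?A. fps_X ^ N * fps_X ^ osize ps) + (\<Sum>ps\<in>?B. fps_X ^ N * fps_X ^ osize ps)"
    by (subst sum.reindex, simp add: inj_on_def, subst sum.reindex, simp add: inj_on_def)
       (simp add: osize_def power_add)
  also have "\<dots> = fps_X ^ N * ((\<Sum>ps\<in>?A. fps_X ^ osize ps) + (\<Sum>ps\<in>?B. fps_X ^ osize ps))"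
    by (simp add: sum_distrib_left distrib_left)
  also have "\<dots> = fps_X ^ N * ((if 1 \<le> N then bG m (N - 1) c else 0) + (if 2 \<le> N then bG m (N - 2) c else 0))"
    unfolding S_shift by (simp add: bG_S)
  finally show ?thesis .
qed

fun gb :: "nat \<Rightarrow> nat \<Rightarrow> rat fps" where
  "gb M 0 = 1"
| "gb 0 (Suc N) = 0"
| "gb (Suc M) (Suc N) = fps_X ^ Suc N * gb M (Suc N) + gb M N"

lemma gb_zero: "M < N \<Longrightarrow> gb M N = 0"
  by (induction M N rule: gb.induct) auto

lemma qpoch_Suc: "qpoch (Suc n) = qpoch n * (1 - fps_X ^ Suc n)"
  by (simp add: qpoch_def)

lemma gb_prod: "N \<le> M \<Longrightarrow> gb M N * (qpoch N * qpoch (M - N)) = qpoch M"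
proof (induction M arbitrary: N)
  case 0 then show ?case by (simp add: qpoch_def)
next
  case (Suc M)
  show ?case
  proof (cases N)
    case 0 then show ?thesis by (simp add: qpoch_def)
  next
    case (Suc N')
    have t2: "gb M N' * (qpoch (Suc N') * qpoch (M - N')) = qpoch M * (1 - fps_X ^ Suc N')"
      using Suc.IH[of N'] Suc.prems \<open>N = Suc N'\<close> by (simp add: qpoch_Suc algebra_simps)
    have t1: "fps_X ^ Suc N' * gb M (Suc N') * (qpoch (Suc N') * qpoch (M - N'))
        = qpoch M * (fps_X ^ Suc N' - fps_X ^ Suc M)"
    proof (cases "N' = M")
      case True then show ?thesis by (simp add: gb_zero)
    next
      case False
      then have le: "Suc N' \<le> M" using Suc.prems \<open>N = Suc N'\<close> by simp
      then have eq: "M - N' = Suc (M - Suc N')" by simp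
      have "fps_X ^ Suc N' * gb M (Suc N') * (qpoch (Suc N') * qpoch (M - N'))
          = fps_X ^ Suc N' * (1 - fps_X ^ (M - N')) * (gb M (Suc N') * (qpoch (Suc N') * qpoch (M - Suc N')))"
        unfolding eq qpoch_Suc by (simp add: algebra_simps)
      also have "\<dots> = fps_X ^ Suc N' * (1 - fps_X ^ (M - N')) * qpoch M"
        using Suc.IH[OF le] by simp
      also have "fps_X ^ Suc N' * (1 - fps_X ^ (M - N')) = (fps_X ^ Suc N' - fps_X ^ Suc M :: rat fps)"
        using le by (simp add: algebra_simps flip: power_add)
      finally show ?thesis by (simp add: algebra_simps)
    qed
    have "gb (Suc M) N * (qpoch N * qpoch (Suc M - N))
        = fps_X ^ Suc N' * gb M (Suc N') * (qpoch (Suc N') * qpoch (M - N'))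
          + gb M N' * (qpoch (Suc N') * qpoch (M - N'))"
      using \<open>N = Suc N'\<close> by (simp add: algebra_simps)
    also have "\<dots> = qpoch M * (1 - fps_X ^ Suc M)"
      unfolding t1 t2 by (simp add: algebra_simps)
    also have "\<dots> = qpoch (Suc M)" by (simp add: qpoch_Suc)
    finally show ?thesis .
  qed
qed

lemma qpoch_nz: "qpoch n \<noteq> 0"
proof -
  have "fps_nth (qpoch n) 0 = 1"
    by (induction n) (simp_all add: qpoch_def qpoch_Suc[unfolded qpoch_def])
  then show ?thesis by auto
qed

lemma gauss_gb: "gauss_binom M N = gb M N"
proof (cases "N \<le> M")
  case True
  have nz: "qpoch N * qpoch (M - N) \<noteq> 0" using qpoch_nz by simp
  show ?thesis using True gb_prod[OF True, symmetric] nz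
    by (simp add: gauss_binom_def)
next
  case False then show ?thesis by (simp add: gauss_binom_def gb_zero)
qed

definition CF :: "nat \<Rightarrow> nat \<Rightarrow> rat fps" where
  "CF m N = (if m \<le> N then fps_X ^ (((m + 1) choose 2) + ((N - m + 1) choose 2)) * gb (m - 1) (N - m) else 0)"

lemma G1: "G (Suc 0) = {[p] | p. fst p \<ge> 1}"
proof -
  have "length ps = Suc 0 \<longleftrightarrow> (\<exists>p. ps = [p])" for ps :: "opart list"
    by (cases ps) auto
  then show ?thesis by (auto simp: G_chain)
qed

lemma base: "bG (Suc 0) N (1, b) = CF (Suc 0) N"
proof -
  have "S (Suc 0) N (1, b) = (if N = 1 then {[(1, b)]} else {})"
    by (auto simp: S_def G1)
  then show ?thesis
    by (cases N) (auto simp: bG_S CF_def osize_def gb_zero numeral_2_eq_2)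
qed

lemma main: "m \<ge> 1 \<Longrightarrow> bG m N (1, b) = CF m N"
proof (induction m arbitrary: N rule: nat_induct_at_least)
  case base then show ?case using Submission.base by simp
next
  case (Suc m)
  have r: "bG (Suc m) N (1, b) = fps_X ^ N * ((if 1 \<le> N then CF m (N - 1) else 0) + (if 2 \<le> N then CF m (N - 2) else 0))"
    using bG_rec[OF Suc.hyps] Suc.IH by simp
  show ?case
  proof (cases "Suc m \<le> N")
    case False then show ?thesis unfolding r by (auto simp: CF_def)
  next
    case True
    then obtain j where N: "N = Suc m + j" using le_Suc_ex by blast
    obtain M where M: "m = Suc M" using Suc.hyps by (cases m) auto
    show ?thesis
    proof (cases j)
      case 0
      show ?thesis unfolding r using N M 0
        by (simp add: CF_def numeral_2_eq_2 power_add)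
    next
      case (Suc j')
      have e1: "N + (((m + 1) choose 2) + ((j + 1) choose 2)) = (((Suc m + 1) choose 2) + ((j + 1) choose 2)) + Suc j'"
        using N Suc by (simp add: numeral_2_eq_2)
      have e2: "N + (((m + 1) choose 2) + ((j' + 1) choose 2)) = (((Suc m + 1) choose 2) + ((j + 1) choose 2))"
        using N Suc by (simp add: numeral_2_eq_2)
      have "bG (Suc m) N (1, b) = fps_X ^ (N + (((m + 1) choose 2) + ((j + 1) choose 2))) * gb M j
          + fps_X ^ (N + (((m + 1) choose 2) + ((j' + 1) choose 2))) * gb M j'"
        unfolding r using N M Suc by (simp add: CF_def algebra_simps power_add)
      also have "\<dots> = fps_X ^ (((Suc m + 1) choose 2) + ((j + 1) choose 2)) * gb (Suc M) j"
        unfolding e1 e2 using Suc by (simp add: algebra_simps power_add)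
      also have "\<dots> = CF (Suc m) N" using N M by (simp add: CF_def)
      finally show ?thesis .
    qed
  qed
qed

theorem mainTheorem16:
  fixes m j :: nat
  assumes "m \<ge> 1"
  shows "bG m (m + j) (1, False) = fps_X ^ (((m + 1) choose 2) + ((j + 1) choose 2)) * gauss_binom (m - 1) j
       \<and> bG m (m + j) (1, True) = fps_X ^ (((m + 1) choose 2) + ((j + 1) choose 2)) * gauss_binom (m - 1) j"
  using main[OF assms] by (simp add: CF_def gauss_gb)

end
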